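(* Let $n\geq 2$ and let $R$ be the unital associative ring $\langle x,y \mid x^n=0,\ y^n=0,\ xy+y^{n-1}x^{n-1}=1\rangle$. For any integers $k,l,m\geq 0$ with $m\geq l$, the following hold in $R$: $$x^ky^lx^m = \begin{cases} y^{l-k}x^m & \text{if } l\geq k,\\ x^{k+m-l} & \text{if } l\leq k,\end{cases}\qquad y^mx^ly^k = \begin{cases} y^{m}x^{l-k} & \text{if } l\geq k,\\ y^{k+m-l} & \text{if } l\leq k.\end{cases}$$
   Context: $R$ denotes the quotient of the free unital associative ring $\mathbb{Z}\langle x,y\rangle$ by the two-sided ideal generated by $x^n$, $y^n$ and $xy+y^{n-1}x^{n-1}-1$; $x^0=y^0=1$. *)

theory Defs
  imports Main
begin

end

theory Submission
  imports Defs
begin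

lemma pow_zero_ge:
  fixes x :: "'a::ring_1"
  assumes "x ^ n = 0" "n \<le> p"
  shows "x ^ p = 0"
proof -
  have "x ^ p = x ^ n * x ^ (p - n)" using assms(2) by (simp add: power_add[symmetric])
  thus ?thesis using assms(1) by simp
qed

lemma partA:
  fixes x y :: "'a::ring_1" and n l :: nat
  assumes n2: "n \<ge> 2"
    and xn: "x ^ n = 0" and yn: "y ^ n = 0"
    and rel: "x * y + y ^ (n - 1) * x ^ (n - 1) = 1"
  shows "\<forall>k m. l \<le> m \<longrightarrow> x ^ k * y ^ l * x ^ m = (if k \<le> l then y ^ (l - k) * x ^ m else x ^ (k + m - l))"
proof (induction l)
  case 0
  then show ?case by (simp add: power_add)
next
  case (Suc l)
  show ?case
  proof (intro allI impI)
    fix k m assume lm: "Suc l \<le> m"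
    show "x ^ k * y ^ Suc l * x ^ m = (if k \<le> Suc l then y ^ (Suc l - k) * x ^ m else x ^ (k + m - Suc l))"
    proof (cases "Suc l \<ge> n")
      case True
      have ym: "y ^ Suc l = 0" using pow_zero_ge[OF yn True] .
      have xm: "x ^ m = 0" using pow_zero_ge[OF xn] True lm by simp
      have "\<not> k \<le> Suc l \<Longrightarrow> x ^ (k + m - Suc l) = 0" using pow_zero_ge[OF xn] True lm by simp
      then show ?thesis using ym xm by simp
    next
      case False
      show ?thesis
      proof (cases k)
        case 0 then show ?thesis by simp
      next
        case (Suc j)
        have "x ^ (n - 1) * y ^ l * x ^ m = x ^ ((n - 1) + m - l)"
          using Suc.IH lm False by auto
        also have "\<dots> = 0" using pow_zero_ge[OF xn] lm by simp
        finally have z: "x ^ (n - 1) * y ^ l * x ^ m = 0" .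
        have e1: "x ^ k = x ^ j * x" using Suc by (simp only: power_Suc2)
        have e2: "y ^ Suc l = y * y ^ l" by (simp only: power_Suc)
        have xy: "x * y = 1 - y ^ (n - 1) * x ^ (n - 1)" using rel by (simp add: eq_diff_eq)
        have "x ^ k * y ^ Suc l * x ^ m = x ^ j * (x * y) * y ^ l * x ^ m"
          by (simp only: e1 e2 mult.assoc)
        also have "\<dots> = x ^ j * y ^ l * x ^ m - x ^ j * y ^ (n - 1) * (x ^ (n - 1) * y ^ l * x ^ m)"
          unfolding xy by (simp only: right_diff_distrib left_diff_distrib mult.assoc mult_1_right mult_1_left)
        also have "\<dots> = x ^ j * y ^ l * x ^ m" using z by simp
        also have "\<dots> = (if j \<le> l then y ^ (l - j) * x ^ m else x ^ (j + m - l))"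
          using Suc.IH lm by auto
        finally show ?thesis using Suc by (auto simp: Suc_diff_le)
      qed
    qed
  qed
qed

lemma partB:
  fixes x y :: "'a::ring_1" and n l :: nat
  assumes n2: "n \<ge> 2"
    and xn: "x ^ n = 0" and yn: "y ^ n = 0"
    and rel: "x * y + y ^ (n - 1) * x ^ (n - 1) = 1"
  shows "\<forall>k m. l \<le> m \<longrightarrow> y ^ m * x ^ l * y ^ k = (if k \<le> l then y ^ m * x ^ (l - k) else y ^ (k + m - l))"
proof (induction l)
  case 0
  then show ?case by (simp add: power_add[symmetric] add.commute)
next
  case (Suc l)
  show ?case
  proof (intro allI impI)
    fix k m assume lm: "Suc l \<le> m"
    show "y ^ m * x ^ Suc l * y ^ k = (if k \<le> Suc l then y ^ m * x ^ (Suc l - k) else y ^ (k + m - Suc l))"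
    proof (cases "Suc l \<ge> n")
      case True
      have ym: "x ^ Suc l = 0" using pow_zero_ge[OF xn True] .
      have xm: "y ^ m = 0" using pow_zero_ge[OF yn] True lm by simp
      have "\<not> k \<le> Suc l \<Longrightarrow> y ^ (k + m - Suc l) = 0" using pow_zero_ge[OF yn] True lm by simp
      then show ?thesis using ym xm by simp
    next
      case False
      show ?thesis
      proof (cases k)
        case 0 then show ?thesis by simp
      next
        case (Suc j)
        have "y ^ m * x ^ l * y ^ (n - 1) = y ^ ((n - 1) + m - l)"
          using Suc.IH lm False by auto
        also have "\<dots> = 0" using pow_zero_ge[OF yn] lm by simp
        finally have z: "y ^ m * x ^ l * y ^ (n - 1) = 0" .
        have e1: "y ^ k = y * y ^ j" using Suc by (simp only: power_Suc)
        have e2: "x ^ Suc l = x ^ l * x" by (simp only: power_Suc2)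
        have xy: "x * y = 1 - y ^ (n - 1) * x ^ (n - 1)" using rel by (simp add: eq_diff_eq)
        have "y ^ m * x ^ Suc l * y ^ k = y ^ m * x ^ l * (x * y) * y ^ j"
          by (simp only: e1 e2 mult.assoc)
        also have "\<dots> = y ^ m * x ^ l * y ^ j - (y ^ m * x ^ l * y ^ (n - 1)) * x ^ (n - 1) * y ^ j"
          unfolding xy by (simp only: right_diff_distrib left_diff_distrib mult.assoc mult_1_right mult_1_left)
        also have "\<dots> = y ^ m * x ^ l * y ^ j" using z by simp
        also have "\<dots> = (if j \<le> l then y ^ m * x ^ (l - j) else y ^ (j + m - l))"
          using Suc.IH lm by auto
        finally show ?thesis using Suc by (auto simp: Suc_diff_le)
      qed
    qed
  qed
qed

theorem lemma1:
  fixes x y :: "'a::ring_1" and n k l m :: nat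
  assumes "n \<ge> 2"
    and "x ^ n = 0" and "y ^ n = 0"
    and "x * y + y ^ (n - 1) * x ^ (n - 1) = 1"
    and "l \<le> m"
  shows "x ^ k * y ^ l * x ^ m = (if k \<le> l then y ^ (l - k) * x ^ m else x ^ (k + m - l))
       \<and> y ^ m * x ^ l * y ^ k = (if k \<le> l then y ^ m * x ^ (l - k) else y ^ (k + m - l))"
  using partA[OF assms(1-4), of l] partB[OF assms(1-4), of l] assms(5) by blast

end
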